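(* Let $\lambda=\lambda(d)>0$ be any function of $d$ that is bounded above by a constant. Then there is a function $\varepsilon(d)\to0$ as $d\to\infty$ such that for every $d$ and every triangle-free graph $G$ on $n$ vertices with maximum degree $d$, \[ \frac1n\overline\alpha_G(\lambda)\;\ge\;(1-\varepsilon(d))\,\alpha_{T_d}(\lambda). \]
   Context: For a graph $G$ and $\lambda>0$, $\overline\alpha_G(\lambda)=\lambda P_G'(\lambda)/P_G(\lambda)$ where $P_G(\lambda)=\sum_J\lambda^{|J|}$ over all independent sets $J$ of $G$; it is the expected size of an independent set drawn from the hard-core model $\Pr[J]=\lambda^{|J|}/P_G(\lambda)$. For an integer $d\ge2$ and $\lambda>0$, $\alpha_{T_d}(\lambda)$ denotes the unique solution $\alpha\in(0,1/2)$ of $\lambda=\frac{\alpha}{1-\alpha}\left(\frac{1-\alpha}{1-2\alpha}\right)^d$. *)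

theory Defs
  imports "HOL-Analysis.Analysis"
begin

text \<open>Finite simple graphs with vertices drawn from nat (every finite graph is
isomorphic to one of these): vertex set V, symmetric irreflexive edge relation E.\<close>

definition simple_graph :: "nat set \<Rightarrow> (nat \<Rightarrow> nat \<Rightarrow> bool) \<Rightarrow> bool" where
  "simple_graph V E \<longleftrightarrow> finite V \<and> (\<forall>u v. E u v \<longrightarrow> u \<in> V \<and> v \<in> V)
     \<and> (\<forall>u v. E u v \<longrightarrow> E v u) \<and> (\<forall>u. \<not> E u u)"

definition triangle_free :: "nat set \<Rightarrow> (nat \<Rightarrow> nat \<Rightarrow> bool) \<Rightarrow> bool" where
  "triangle_free V E \<longleftrightarrow> \<not> (\<exists>u\<in>V. \<exists>v\<in>V. \<exists>w\<in>V. E u v \<and> E v w \<and> E u w)"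

definition vdegree :: "nat set \<Rightarrow> (nat \<Rightarrow> nat \<Rightarrow> bool) \<Rightarrow> nat \<Rightarrow> nat" where
  "vdegree V E u = card {v \<in> V. E u v}"

definition max_degree :: "nat set \<Rightarrow> (nat \<Rightarrow> nat \<Rightarrow> bool) \<Rightarrow> nat \<Rightarrow> bool" where
  "max_degree V E d \<longleftrightarrow> (\<forall>u\<in>V. vdegree V E u \<le> d) \<and> (\<exists>u\<in>V. vdegree V E u = d)"

definition independent_set :: "nat set \<Rightarrow> (nat \<Rightarrow> nat \<Rightarrow> bool) \<Rightarrow> nat set \<Rightarrow> bool" where
  "independent_set V E J \<longleftrightarrow> J \<subseteq> V \<and> (\<forall>u\<in>J. \<forall>v\<in>J. \<not> E u v)"

definition indep_poly :: "nat set \<Rightarrow> (nat \<Rightarrow> nat \<Rightarrow> bool) \<Rightarrow> real \<Rightarrow> real" where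
  "indep_poly V E lam = (\<Sum>J \<in> {J. independent_set V E J}. lam ^ card J)"

definition alpha_bar :: "nat set \<Rightarrow> (nat \<Rightarrow> nat \<Rightarrow> bool) \<Rightarrow> real \<Rightarrow> real" where
  "alpha_bar V E lam = lam * deriv (indep_poly V E) lam / indep_poly V E lam"

text \<open>alpha_{T_d}(lambda): the unique alpha in (0,1/2) solving the tree equation.\<close>
definition alpha_T :: "nat \<Rightarrow> real \<Rightarrow> real" where
  "alpha_T d lam = (THE a. 0 < a \<and> a < 1/2 \<and>
      lam = a / (1 - a) * ((1 - a) / (1 - 2 * a)) ^ d)"

end

theory Submission
  imports Defs
begin

lemma pow_sum1:
  fixes x :: real
  assumes "finite U"
  shows "(\<Sum>S\<in>Pow U. x ^ card S) = (1 + x) ^ card U"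
  using assms
proof (induction U rule: finite_induct)
  case empty then show ?case by simp
next
  case (insert a U)
  have disj: "Pow U \<inter> insert a ` Pow U = {}" using insert by auto
  have inj: "inj_on (insert a) (Pow U)" using insert by (auto simp: inj_on_def)
  have fin: "finite (Pow U)" using insert by simp
  have "(\<Sum>S\<in>Pow (insert a U). x ^ card S) = (\<Sum>S\<in>Pow U. x ^ card S) + (\<Sum>S\<in>insert a ` Pow U. x ^ card S)"
    unfolding Pow_insert by (rule sum.union_disjoint[OF fin _ disj]) (use fin in blast)
  also have "(\<Sum>S\<in>insert a ` Pow U. x ^ card S) = (\<Sum>S\<in>Pow U. x ^ card (insert a S))"
    by (simp add: sum.reindex[OF inj])
  also have "\<dots> = (\<Sum>S\<in>Pow U. x * x ^ card S)"
  proof (rule sum.cong)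
    fix S assume "S \<in> Pow U"
    then have "finite S" "a \<notin> S" using insert finite_subset by auto
    then show "x ^ card (insert a S) = x * x ^ card S" by simp
  qed simp
  finally show ?case using insert by (simp add: sum_distrib_left[symmetric] algebra_simps)
qed

lemma pow_sum2:
  fixes x :: real
  assumes "finite U"
  shows "(1 + x) * (\<Sum>S\<in>Pow U. real (card S) * x ^ card S) = real (card U) * x * (1 + x) ^ card U"
  using assms
proof (induction U rule: finite_induct)
  case empty then show ?case by simp
next
  case (insert a U)
  have disj: "Pow U \<inter> insert a ` Pow U = {}" using insert by auto
  have inj: "inj_on (insert a) (Pow U)" using insert by (auto simp: inj_on_def)
  have fin: "finite (Pow U)" using insert by simp
  have "(\<Sum>S\<in>Pow (insert a U). real (card S) * x ^ card S) = (\<Sum>S\<in>Pow U. real (card S) * x ^ card S) + (\<Sum>S\<in>insert a ` Pow U. real (card S) * x ^ card S)"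
    unfolding Pow_insert by (rule sum.union_disjoint[OF fin _ disj]) (use fin in blast)
  also have "(\<Sum>S\<in>insert a ` Pow U. real (card S) * x ^ card S) = (\<Sum>S\<in>Pow U. real (card (insert a S)) * x ^ card (insert a S))"
    by (simp add: sum.reindex[OF inj])
  also have "\<dots> = (\<Sum>S\<in>Pow U. x * (real (card S) * x ^ card S) + x * x ^ card S)"
  proof (rule sum.cong)
    fix S assume "S \<in> Pow U"
    then have "finite S" "a \<notin> S" using insert finite_subset by auto
    then show "real (card (insert a S)) * x ^ card (insert a S) = x * (real (card S) * x ^ card S) + x * x ^ card S" by (simp add: algebra_simps)
  qed simp
  also have "\<dots> = x * (\<Sum>S\<in>Pow U. real (card S) * x ^ card S) + x * (1+x)^card U"
    using pow_sum1[OF insert(1), of x] by (simp add: sum.distrib sum_distrib_left[symmetric])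
  finally have eq: "(\<Sum>S\<in>Pow (insert a U). real (card S) * x ^ card S) = (1 + x) * (\<Sum>S\<in>Pow U. real (card S) * x ^ card S) + x * (1+x)^card U"
    by (simp add: algebra_simps)
  show ?case using insert eq by (simp add: algebra_simps)
qed

definition Nb :: "nat set \<Rightarrow> (nat \<Rightarrow> nat \<Rightarrow> bool) \<Rightarrow> nat \<Rightarrow> nat set" where
  "Nb V E v = {u\<in>V. E v u}"
definition Mo :: "nat set \<Rightarrow> (nat \<Rightarrow> nat \<Rightarrow> bool) \<Rightarrow> nat \<Rightarrow> nat set" where
  "Mo V E v = V - insert v (Nb V E v)"
definition Unc :: "nat set \<Rightarrow> (nat \<Rightarrow> nat \<Rightarrow> bool) \<Rightarrow> nat \<Rightarrow> nat set \<Rightarrow> nat set" where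
  "Unc V E v K = {u\<in>Nb V E v. \<forall>x\<in>K. \<not> E u x}"
definition Iv :: "nat set \<Rightarrow> (nat \<Rightarrow> nat \<Rightarrow> bool) \<Rightarrow> nat \<Rightarrow> nat set set" where
  "Iv V E v = {K. independent_set V E K \<and> K \<subseteq> Mo V E v}"

lemma finite_I: "finite V \<Longrightarrow> finite {J. independent_set V E J}"
  by (rule finite_subset[of _ "Pow V"]) (auto simp: independent_set_def)

lemma finite_Iv: "finite V \<Longrightarrow> finite (Iv V E v)"
  by (rule finite_subset[of _ "Pow V"]) (auto simp: Iv_def independent_set_def)

lemma fiber:
  assumes G: "simple_graph V E" and T: "triangle_free V E" and v: "v \<in> V" and K: "K \<in> Iv V E v"
  shows "{J \<in> {J. independent_set V E J}. J \<inter> Mo V E v = K} = insert (insert v K) ((\<lambda>S. K \<union> S) ` Pow (Unc V E v K))"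
proof (intro equalityI subsetI)
  fix J assume J: "J \<in> {J \<in> {J. independent_set V E J}. J \<inter> Mo V E v = K}"
  then have ind: "independent_set V E J" and JK: "J \<inter> Mo V E v = K" by auto
  show "J \<in> insert (insert v K) ((\<lambda>S. K \<union> S) ` Pow (Unc V E v K))"
  proof (cases "v \<in> J")
    case True
    have "J \<inter> Nb V E v = {}" using ind True by (auto simp: independent_set_def Nb_def)
    then have "J = insert v K" using True JK ind by (auto simp: independent_set_def Mo_def)
    then show ?thesis by simp
  next
    case False
    have "J \<inter> Nb V E v \<subseteq> Unc V E v K" using ind JK by (auto simp: independent_set_def Unc_def)
    moreover have "J = K \<union> (J \<inter> Nb V E v)" using False JK ind by (auto simp: independent_set_def Mo_def)
    ultimately show ?thesis by blast
  qed
next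
  fix J assume J: "J \<in> insert (insert v K) ((\<lambda>S. K \<union> S) ` Pow (Unc V E v K))"
  have Kind: "independent_set V E K" and KM: "K \<subseteq> Mo V E v" using K by (auto simp: Iv_def)
  have sym: "\<And>a b. E a b \<Longrightarrow> E b a" and irr: "\<And>a. \<not> E a a" and inV: "\<And>a b. E a b \<Longrightarrow> a \<in> V \<and> b \<in> V"
    using G by (auto simp: simple_graph_def)
  show "J \<in> {J \<in> {J. independent_set V E J}. J \<inter> Mo V E v = K}"
  proof (cases "J = insert v K")
    case True
    have "\<And>x. x \<in> K \<Longrightarrow> \<not> E v x" using KM inV by (auto simp: Mo_def Nb_def)
    then have "independent_set V E J" using True Kind v irr unfolding independent_set_def by (metis insert_iff insert_subset sym)
    moreover have "J \<inter> Mo V E v = K" using True KM by (auto simp: Mo_def)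
    ultimately show ?thesis by simp
  next
    case False
    then obtain S where S: "S \<subseteq> Unc V E v K" and JS: "J = K \<union> S" using J by auto
    have SN: "S \<subseteq> Nb V E v" using S by (auto simp: Unc_def)
    have "\<And>a b. a \<in> S \<Longrightarrow> b \<in> S \<Longrightarrow> \<not> E a b"
    proof
      fix a b assume a: "a \<in> S" and b: "b \<in> S" and ab: "E a b"
      have "E v a" "E v b" "a \<in> V" "b \<in> V" using a b SN by (auto simp: Nb_def)
      then show False using T ab v unfolding triangle_free_def by blast
    qed
    moreover have "\<And>a b. a \<in> S \<Longrightarrow> b \<in> K \<Longrightarrow> \<not> E a b \<and> \<not> E b a" using S sym unfolding Unc_def by blast
    ultimately have "independent_set V E J" using Kind SN JS unfolding independent_set_def Nb_def by blast
    moreover have "J \<inter> Mo V E v = K" using JS KM SN by (auto simp: Mo_def)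
    ultimately show ?thesis by simp
  qed
qed

lemma decomp:
  fixes F :: "nat set \<Rightarrow> real"
  assumes G: "simple_graph V E" and T: "triangle_free V E" and v: "v \<in> V"
  shows "(\<Sum>J\<in>{J. independent_set V E J}. F J) = (\<Sum>K\<in>Iv V E v. F (insert v K) + (\<Sum>S\<in>Pow (Unc V E v K). F (K \<union> S)))"
proof -
  have fV: "finite V" using G by (simp add: simple_graph_def)
  have img: "(\<lambda>J. J \<inter> Mo V E v) ` {J. independent_set V E J} \<subseteq> Iv V E v"
    by (auto simp: Iv_def independent_set_def)
  have "(\<Sum>J\<in>{J. independent_set V E J}. F J) = (\<Sum>K\<in>Iv V E v. sum F {J \<in> {J. independent_set V E J}. J \<inter> Mo V E v = K})"
    using sum.group[OF finite_I[OF fV] finite_Iv[OF fV] img, of F] by simp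
  also have "\<dots> = (\<Sum>K\<in>Iv V E v. F (insert v K) + (\<Sum>S\<in>Pow (Unc V E v K). F (K \<union> S)))"
  proof (rule sum.cong)
    fix K assume K: "K \<in> Iv V E v"
    have KM: "K \<subseteq> Mo V E v" using K by (simp add: Iv_def)
    have UN: "Unc V E v K \<subseteq> Nb V E v" by (auto simp: Unc_def)
    have fU: "finite (Unc V E v K)" using fV by (rule finite_subset[rotated]) (auto simp: Unc_def Nb_def)
    have dis: "K \<inter> Unc V E v K = {}" using KM UN unfolding Mo_def by blast
    have inj: "inj_on (\<lambda>S. K \<union> S) (Pow (Unc V E v K))"
      unfolding inj_on_def using dis by blast
    have vK: "v \<notin> K" using KM unfolding Mo_def by blast
    have vN: "v \<notin> Nb V E v" using G unfolding Nb_def simple_graph_def by blast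
    have nin: "insert v K \<notin> (\<lambda>S. K \<union> S) ` Pow (Unc V E v K)"
      using vK vN UN by blast
    show "sum F {J \<in> {J. independent_set V E J}. J \<inter> Mo V E v = K} = F (insert v K) + (\<Sum>S\<in>Pow (Unc V E v K). F (K \<union> S))"
      unfolding fiber[OF G T v K]
      using fU by (simp add: sum.insert[OF _ nin] sum.reindex[OF inj])
  qed simp
  finally show ?thesis .
qed

lemma Kfacts:
  assumes G: "simple_graph V E" and v: "v \<in> V" and K: "K \<in> Iv V E v" and S: "S \<subseteq> Unc V E v K"
  shows "card (K \<union> S) = card K + card S" "(K \<union> S) \<inter> Nb V E v = S" "v \<notin> K \<union> S"
    "card (insert v K) = Suc (card K)" "insert v K \<inter> Nb V E v = {}" "card (Unc V E v K) \<le> vdegree V E v"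
proof -
  have fV: "finite V" using G by (simp add: simple_graph_def)
  have KM: "K \<subseteq> V - insert v (Nb V E v)" using K by (simp add: Iv_def Mo_def)
  have UN: "Unc V E v K \<subseteq> Nb V E v" unfolding Unc_def by blast
  have vK: "v \<notin> K" using KM by blast
  have vN: "v \<notin> Nb V E v" using G unfolding Nb_def simple_graph_def by blast
  have KV: "K \<subseteq> V" using KM by blast
  have fK: "finite K" using finite_subset[OF KV fV] .
  have NV: "Nb V E v \<subseteq> V" unfolding Nb_def by blast
  have fN: "finite (Nb V E v)" using finite_subset[OF NV fV] .
  have SN: "S \<subseteq> Nb V E v" using S UN by (rule subset_trans)
  have fS: "finite S" using finite_subset[OF SN fN] .
  have KN: "K \<inter> Nb V E v = {}" using KM by blast
  have dis: "K \<inter> S = {}" using KN SN by blast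
  show "card (K \<union> S) = card K + card S" using fK fS dis by (rule card_Un_disjoint)
  show "(K \<union> S) \<inter> Nb V E v = S" using KN SN by blast
  show "v \<notin> K \<union> S" using vK vN SN by blast
  show "card (insert v K) = Suc (card K)" using fK vK by simp
  show "insert v K \<inter> Nb V E v = {}" using vN KN by blast
  have "card (Unc V E v K) \<le> card (Nb V E v)" using card_mono[OF fN UN] .
  then show "card (Unc V E v K) \<le> vdegree V E v" unfolding vdegree_def Nb_def .
qed

lemma Zdec:
  fixes x :: real
  assumes G: "simple_graph V E" and T: "triangle_free V E" and v: "v \<in> V"
  shows "indep_poly V E x = (\<Sum>K\<in>Iv V E v. x ^ card K * (x + (1+x) ^ card (Unc V E v K)))"
proof -
  have fV: "finite V" using G by (simp add: simple_graph_def)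
  have "indep_poly V E x = (\<Sum>K\<in>Iv V E v. x ^ card (insert v K) + (\<Sum>S\<in>Pow (Unc V E v K). x ^ card (K \<union> S)))"
    unfolding indep_poly_def by (rule decomp[OF G T v])
  also have "\<dots> = (\<Sum>K\<in>Iv V E v. x ^ card K * (x + (1+x) ^ card (Unc V E v K)))"
  proof (rule sum.cong)
    fix K assume K: "K \<in> Iv V E v"
    have fU: "finite (Unc V E v K)" using fV by (rule finite_subset[rotated]) (auto simp: Unc_def Nb_def)
    have "(\<Sum>S\<in>Pow (Unc V E v K). x ^ card (K \<union> S)) = (\<Sum>S\<in>Pow (Unc V E v K). x ^ card K * x ^ card S)"
      by (rule sum.cong) (simp_all add: Kfacts(1)[OF G v K] power_add)
    also have "\<dots> = x ^ card K * (1+x) ^ card (Unc V E v K)"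
      by (simp add: sum_distrib_left[symmetric] pow_sum1[OF fU])
    finally show "x ^ card (insert v K) + (\<Sum>S\<in>Pow (Unc V E v K). x ^ card (K \<union> S)) = x ^ card K * (x + (1+x) ^ card (Unc V E v K))"
      by (simp add: Kfacts(4)[OF G v K empty_subsetI] algebra_simps)
  qed simp
  finally show ?thesis .
qed

lemma Pdec:
  fixes x :: real
  assumes G: "simple_graph V E" and T: "triangle_free V E" and v: "v \<in> V"
  shows "(\<Sum>J\<in>{J. independent_set V E J}. if v \<in> J then x ^ card J else 0) = (\<Sum>K\<in>Iv V E v. x ^ card K * x)"
proof -
  have "(\<Sum>J\<in>{J. independent_set V E J}. if v \<in> J then x ^ card J else 0) = (\<Sum>K\<in>Iv V E v. (if v \<in> insert v K then x ^ card (insert v K) else 0) + (\<Sum>S\<in>Pow (Unc V E v K). if v \<in> K \<union> S then x ^ card (K \<union> S) else 0))"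
    by (rule decomp[OF G T v])
  also have "\<dots> = (\<Sum>K\<in>Iv V E v. x ^ card K * x)"
  proof (rule sum.cong)
    fix K assume K: "K \<in> Iv V E v"
    have "(\<Sum>S\<in>Pow (Unc V E v K). if v \<in> K \<union> S then x ^ card (K \<union> S) else 0) = 0"
      by (rule sum.neutral) (use Kfacts(3)[OF G v K] in auto)
    then show "(if v \<in> insert v K then x ^ card (insert v K) else 0) + (\<Sum>S\<in>Pow (Unc V E v K). if v \<in> K \<union> S then x ^ card (K \<union> S) else 0) = x ^ card K * x"
      by (simp add: Kfacts(4)[OF G v K empty_subsetI] algebra_simps)
  qed simp
  finally show ?thesis .
qed

lemma Qdec:
  fixes x :: real
  assumes G: "simple_graph V E" and T: "triangle_free V E" and v: "v \<in> V"
  shows "(1 + x) * (\<Sum>J\<in>{J. independent_set V E J}. real (card (J \<inter> Nb V E v)) * x ^ card J)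
     = (\<Sum>K\<in>Iv V E v. x ^ card K * (real (card (Unc V E v K)) * x * (1+x) ^ card (Unc V E v K)))"
proof -
  have fV: "finite V" using G by (simp add: simple_graph_def)
  have "(\<Sum>J\<in>{J. independent_set V E J}. real (card (J \<inter> Nb V E v)) * x ^ card J) = (\<Sum>K\<in>Iv V E v. real (card (insert v K \<inter> Nb V E v)) * x ^ card (insert v K) + (\<Sum>S\<in>Pow (Unc V E v K). real (card ((K \<union> S) \<inter> Nb V E v)) * x ^ card (K \<union> S)))"
    by (rule decomp[OF G T v])
  also have "\<dots> = (\<Sum>K\<in>Iv V E v. x ^ card K * (\<Sum>S\<in>Pow (Unc V E v K). real (card S) * x ^ card S))"
  proof (rule sum.cong)
    fix K assume K: "K \<in> Iv V E v"
    have "(\<Sum>S\<in>Pow (Unc V E v K). real (card ((K \<union> S) \<inter> Nb V E v)) * x ^ card (K \<union> S)) = (\<Sum>S\<in>Pow (Unc V E v K). x ^ card K * (real (card S) * x ^ card S))"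
      by (rule sum.cong) (simp_all add: Kfacts(1,2)[OF G v K] power_add)
    then show "real (card (insert v K \<inter> Nb V E v)) * x ^ card (insert v K) + (\<Sum>S\<in>Pow (Unc V E v K). real (card ((K \<union> S) \<inter> Nb V E v)) * x ^ card (K \<union> S)) = x ^ card K * (\<Sum>S\<in>Pow (Unc V E v K). real (card S) * x ^ card S)"
      by (simp add: Kfacts(5)[OF G v K empty_subsetI] sum_distrib_left)
  qed simp
  finally have eq: "(\<Sum>J\<in>{J. independent_set V E J}. real (card (J \<inter> Nb V E v)) * x ^ card J) = (\<Sum>K\<in>Iv V E v. x ^ card K * (\<Sum>S\<in>Pow (Unc V E v K). real (card S) * x ^ card S))" .
  have "(1 + x) * (\<Sum>K\<in>Iv V E v. x ^ card K * (\<Sum>S\<in>Pow (Unc V E v K). real (card S) * x ^ card S)) = (\<Sum>K\<in>Iv V E v. (1 + x) * (x ^ card K * (\<Sum>S\<in>Pow (Unc V E v K). real (card S) * x ^ card S)))"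
    by (rule sum_distrib_left)
  also have "\<dots> = (\<Sum>K\<in>Iv V E v. x ^ card K * (real (card (Unc V E v K)) * x * (1+x) ^ card (Unc V E v K)))"
  proof (rule sum.cong)
    fix K assume K: "K \<in> Iv V E v"
    have fU: "finite (Unc V E v K)" using fV by (rule finite_subset[rotated]) (auto simp: Unc_def Nb_def)
    show "(1 + x) * (x ^ card K * (\<Sum>S\<in>Pow (Unc V E v K). real (card S) * x ^ card S)) = x ^ card K * (real (card (Unc V E v K)) * x * (1 + x) ^ card (Unc V E v K))"
      by (subst mult.left_commute) (simp only: pow_sum2[OF fU])
  qed simp
  finally show ?thesis unfolding eq .
qed

lemma Ssum:
  fixes x :: real
  assumes G: "simple_graph V E"
  shows "(\<Sum>v\<in>V. \<Sum>J\<in>{J. independent_set V E J}. if v \<in> J then x ^ card J else 0) = (\<Sum>J\<in>{J. independent_set V E J}. real (card J) * x ^ card J)"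
proof -
  have fV: "finite V" using G by (simp add: simple_graph_def)
  have "(\<Sum>v\<in>V. \<Sum>J\<in>{J. independent_set V E J}. if v \<in> J then x ^ card J else 0) = (\<Sum>J\<in>{J. independent_set V E J}. \<Sum>v\<in>V. if v \<in> J then x ^ card J else 0)"
    by (rule sum.swap)
  also have "\<dots> = (\<Sum>J\<in>{J. independent_set V E J}. real (card J) * x ^ card J)"
  proof (rule sum.cong)
    fix J assume "J \<in> {J. independent_set V E J}"
    then have JV: "J \<subseteq> V" by (simp add: independent_set_def)
    have "(\<Sum>v\<in>V. if v \<in> J then x ^ card J else 0) = (\<Sum>v\<in>V \<inter> J. x ^ card J)"
      by (rule sum.inter_restrict[OF fV, symmetric])
    also have "V \<inter> J = J" using JV by blast
    finally show "(\<Sum>v\<in>V. if v \<in> J then x ^ card J else 0) = real (card J) * x ^ card J" by simp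
  qed simp
  finally show ?thesis .
qed

lemma deg_count:
  assumes G: "simple_graph V E" and deg: "\<forall>u\<in>V. vdegree V E u \<le> d" and JV: "J \<subseteq> V"
  shows "(\<Sum>v\<in>V. card (J \<inter> Nb V E v)) \<le> d * card J"
proof -
  have fV: "finite V" using G by (simp add: simple_graph_def)
  have fJ: "finite J" using finite_subset[OF JV fV] .
  have sym: "\<And>a b. E a b \<Longrightarrow> E b a" using G unfolding simple_graph_def by blast
  have "(\<Sum>v\<in>V. card (J \<inter> Nb V E v)) = (\<Sum>v\<in>V. \<Sum>u\<in>J. if E v u then 1 else 0)"
  proof (rule sum.cong)
    fix v assume "v \<in> V"
    have "J \<inter> Nb V E v = {u\<in>J. E v u}" using JV unfolding Nb_def by blast
    then show "card (J \<inter> Nb V E v) = (\<Sum>u\<in>J. if E v u then 1 else 0)"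
      using fJ by (simp add: sum.If_cases Int_def)
  qed simp
  also have "\<dots> = (\<Sum>u\<in>J. \<Sum>v\<in>V. if E v u then 1 else 0)" by (rule sum.swap)
  also have "\<dots> \<le> (\<Sum>u\<in>J. d)"
  proof (rule sum_mono)
    fix u assume u: "u \<in> J"
    have "(\<Sum>v\<in>V. if E v u then 1 else 0) = card {v\<in>V. E v u}"
      using fV by (simp add: sum.If_cases Int_def)
    also have "{v\<in>V. E v u} = {v\<in>V. E u v}" using sym by blast
    also have "card {v\<in>V. E u v} \<le> d" using deg u JV unfolding vdegree_def by blast
    finally show "(\<Sum>v\<in>V. if E v u then 1 else 0) \<le> d" .
  qed
  finally show ?thesis by (simp add: mult.commute)
qed

lemma Qsum:
  fixes x :: real
  assumes G: "simple_graph V E" and deg: "\<forall>u\<in>V. vdegree V E u \<le> d" and x: "0 \<le> x"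
  shows "(\<Sum>v\<in>V. \<Sum>J\<in>{J. independent_set V E J}. real (card (J \<inter> Nb V E v)) * x ^ card J) \<le> real d * (\<Sum>J\<in>{J. independent_set V E J}. real (card J) * x ^ card J)"
proof -
  have "(\<Sum>v\<in>V. \<Sum>J\<in>{J. independent_set V E J}. real (card (J \<inter> Nb V E v)) * x ^ card J) = (\<Sum>J\<in>{J. independent_set V E J}. \<Sum>v\<in>V. real (card (J \<inter> Nb V E v)) * x ^ card J)"
    by (rule sum.swap)
  also have "\<dots> \<le> (\<Sum>J\<in>{J. independent_set V E J}. real d * (real (card J) * x ^ card J))"
  proof (rule sum_mono)
    fix J assume "J \<in> {J. independent_set V E J}"
    then have JV: "J \<subseteq> V" by (simp add: independent_set_def)
    have "(\<Sum>v\<in>V. real (card (J \<inter> Nb V E v)) * x ^ card J) = real (\<Sum>v\<in>V. card (J \<inter> Nb V E v)) * x ^ card J"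
      by (simp add: sum_distrib_right)
    also have "\<dots> \<le> real (d * card J) * x ^ card J"
      using deg_count[OF G deg JV] x by (intro mult_right_mono) (simp_all only: of_nat_le_iff zero_le_power)
    finally show "(\<Sum>v\<in>V. real (card (J \<inter> Nb V E v)) * x ^ card J) \<le> real d * (real (card J) * x ^ card J)" by simp
  qed
  also have "\<dots> = real d * (\<Sum>J\<in>{J. independent_set V E J}. real (card J) * x ^ card J)"
    by (simp add: sum_distrib_left)
  finally show ?thesis .
qed

lemma ln_lower: "0 < x \<Longrightarrow> x / (1 + x) \<le> ln (1 + (x::real))"
proof -
  assume x: "0 < x"
  have "1 - 1/(1+x) \<le> ln (1+x)"
  proof -
    have "exp (- ln (1+x)) \<ge> 1 + (- ln (1+x))" by (rule exp_ge_add_one_self)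
    moreover have "exp (- ln (1+x)) = 1/(1+x)" using x by (simp add: exp_minus inverse_eq_divide)
    ultimately show ?thesis by simp
  qed
  moreover have "1 - 1/(1+x) = x/(1+x)" using x by (simp add: field_simps)
  ultimately show ?thesis by simp
qed

lemma xexp_mono: "0 \<le> (s::real) \<Longrightarrow> s \<le> t \<Longrightarrow> s * exp s \<le> t * exp t"
  by (meson exp_ge_zero exp_le_cancel_iff mult_mono order.trans)

lemma xexp_strict: "0 \<le> (s::real) \<Longrightarrow> s < t \<Longrightarrow> s * exp s < t * exp t"
proof -
  assume s: "0 \<le> s" and st: "s < t"
  have "s * exp s \<le> s * exp t" using s st by (intro mult_left_mono) auto
  also have "\<dots> < t * exp t" using st by (intro mult_strict_right_mono) auto
  finally show ?thesis .
qed

lemma abstract_bound: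
  fixes P :: "'p set" and a :: "'p \<Rightarrow> real" and Y :: "'p \<Rightarrow> nat" and x :: real
  assumes fP: "finite P" and x: "0 < x" and a: "\<And>p. p \<in> P \<Longrightarrow> 0 \<le> a p"
    and Yd: "\<And>p. p \<in> P \<Longrightarrow> Y p \<le> d"
    and Wpos: "0 < (\<Sum>p\<in>P. a p * (x + (1+x) ^ Y p))"
    and hQ: "(\<Sum>p\<in>P. a p * (real (Y p) * x * (1+x) ^ Y p)) \<le> (1+x) * real d * (\<Sum>p\<in>P. a p * x)"
  shows "real d * x / (1 + x) \<le> ((1+x)^2 * real d * (\<Sum>p\<in>P. a p * x) / (\<Sum>p\<in>P. a p * (x + (1+x) ^ Y p)))
      * exp ((1+x)^2 * real d * (\<Sum>p\<in>P. a p * x) / (\<Sum>p\<in>P. a p * (x + (1+x) ^ Y p)))"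
proof -
  define S where "S = (\<Sum>p\<in>P. a p * x)"
  define W where "W = (\<Sum>p\<in>P. a p * (x + (1+x) ^ Y p))"
  define T where "T = (\<Sum>p\<in>P. a p * (x + (1+x) ^ Y p) * real (Y p))"
  define \<rho> where "\<rho> = x / (1+x)"
  define c where "c = ln (1+x)"
  define \<tau> where "\<tau> = T / W"
  have W: "0 < W" using Wpos by (simp add: W_def)
  have rho: "0 < \<rho>" "\<rho> < 1" using x by (auto simp: \<rho>_def)
  have c: "\<rho> \<le> c" "c \<le> x" "0 < c" using ln_lower[OF x] x
    by (auto simp: \<rho>_def c_def ln_add_one_self_le_self)
  have b: "\<And>p. (1+x) ^ Y p = exp (real (Y p) * c)" using x
    by (simp add: c_def exp_of_nat_mult)
  have bge: "\<And>p. 1 \<le> (1+x) ^ (Y p :: nat)" using x by simp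
  have step1: "\<rho> * T \<le> real d * S * (1 + \<rho>)"
  proof -
    have "\<rho> * T = (\<Sum>p\<in>P. a p * (real (Y p) * x * (1+x) ^ Y p) / (1+x) + \<rho> * real (Y p) * (a p * x))"
      unfolding T_def sum_distrib_left
    proof (rule sum.cong)
      fix p
      have x1: "1 + x \<noteq> 0" using x by simp
      show "\<rho> * (a p * (x + (1+x) ^ Y p) * real (Y p)) = a p * (real (Y p) * x * (1+x) ^ Y p) / (1+x) + \<rho> * real (Y p) * (a p * x)"
      proof -
        have gen: "\<And>A B y. x / (1+x) * (A * (x + B) * y) = A * (y * x * B) / (1+x) + x / (1+x) * y * (A * x)"
          by (simp add: algebra_simps add_divide_distrib)
        show ?thesis unfolding \<rho>_def by (rule gen)
      qed
    qed simp
    also have "\<dots> \<le> (\<Sum>p\<in>P. a p * (real (Y p) * x * (1+x) ^ Y p) / (1+x) + \<rho> * real d * (a p * x))"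
    proof (rule sum_mono)
      fix p assume p: "p \<in> P"
      have "\<rho> * real (Y p) * (a p * x) \<le> \<rho> * real d * (a p * x)"
        using rho Yd[OF p] a[OF p] x by (intro mult_right_mono mult_left_mono) auto
      then show "a p * (real (Y p) * x * (1+x) ^ Y p) / (1+x) + \<rho> * real (Y p) * (a p * x) \<le> a p * (real (Y p) * x * (1+x) ^ Y p) / (1+x) + \<rho> * real d * (a p * x)" by simp
    qed
    also have "\<dots> = (\<Sum>p\<in>P. a p * (real (Y p) * x * (1+x) ^ Y p)) / (1+x) + \<rho> * real d * S"
      by (simp add: sum.distrib sum_divide_distrib sum_distrib_left S_def)
    also have "\<dots> \<le> real d * S + \<rho> * real d * S"
      using hQ x by (simp add: S_def divide_le_eq mult.commute mult.left_commute)
    finally show ?thesis by (simp add: algebra_simps)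
  qed
  have step2: "\<rho> * exp (- c * \<tau>) * W \<le> S"
  proof -
    have "\<rho> * exp (- c * \<tau>) * W = \<rho> * exp (- c * \<tau>) * (W - c * T + c * \<tau> * W)"
      using W by (simp add: \<tau>_def)
    also have "\<dots> = (\<Sum>p\<in>P. \<rho> * (a p * (x + (1+x) ^ Y p)) * (exp (- c * \<tau>) * (1 + (- c * (real (Y p) - \<tau>)))))"
      by (simp add: W_def T_def sum_distrib_left sum_distrib_right sum_subtractf sum.distrib algebra_simps)
    also have "\<dots> \<le> (\<Sum>p\<in>P. \<rho> * (a p * (x + (1+x) ^ Y p)) * exp (- c * real (Y p)))"
    proof (rule sum_mono)
      fix p assume p: "p \<in> P"
      have "exp (- c * \<tau>) * (1 + (- c * (real (Y p) - \<tau>))) \<le> exp (- c * \<tau>) * exp (- c * (real (Y p) - \<tau>))"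
        by (intro mult_left_mono exp_ge_add_one_self) simp
      also have "\<dots> = exp (- c * real (Y p))" by (simp add: exp_add[symmetric] algebra_simps)
      finally have "exp (- c * \<tau>) * (1 + (- c * (real (Y p) - \<tau>))) \<le> exp (- c * real (Y p))" .
      moreover have "0 \<le> \<rho> * (a p * (x + (1+x) ^ Y p))" using rho a[OF p] x by simp
      ultimately show "\<rho> * (a p * (x + (1+x) ^ Y p)) * (exp (- c * \<tau>) * (1 + (- c * (real (Y p) - \<tau>)))) \<le> \<rho> * (a p * (x + (1+x) ^ Y p)) * exp (- c * real (Y p))"
        by (rule mult_left_mono)
    qed
    also have "\<dots> \<le> S" unfolding S_def
    proof (rule sum_mono)
      fix p assume p: "p \<in> P"
      define B where "B = (1+x) ^ Y p"
      have B1: "1 \<le> B" using bge by (simp add: B_def)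
      have eB: "exp (- c * real (Y p)) = 1 / B" using b[of p] by (simp add: B_def exp_minus inverse_eq_divide mult.commute)
      have "\<rho> * (a p * (x + B)) * (1 / B) = \<rho> * a p * (x / B + 1)" using B1 by (simp add: field_simps)
      also have "\<dots> \<le> \<rho> * a p * (x + 1)"
        using rho a[OF p] x B1 by (intro mult_left_mono) (auto simp: divide_le_eq)
      also have "\<dots> = a p * x" using x by (simp add: \<rho>_def field_simps)
      finally show "\<rho> * (a p * (x + (1+x) ^ Y p)) * exp (- c * real (Y p)) \<le> a p * x" using eB by (simp add: B_def)
    qed
    finally show ?thesis .
  qed
  define \<alpha> where "\<alpha> = S / W"
  have alpha1: "\<rho> * exp (- c * \<tau>) \<le> \<alpha>" using step2 W by (simp add: \<alpha>_def field_simps)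
  have tau: "\<tau> \<le> real d * (1 + \<rho>) * \<alpha> / \<rho>"
    using step1 W rho by (simp add: \<tau>_def \<alpha>_def field_simps)
  define k where "k = c * (1 + \<rho>) / \<rho>"
  define \<beta> where "\<beta> = real d * \<alpha>"
  have alpha_nn: "0 \<le> \<alpha>" using alpha1 rho by (meson exp_gt_zero mult_pos_pos less_le_trans less_imp_le)
  have "- c * \<tau> \<ge> - c * (real d * (1 + \<rho>) * \<alpha> / \<rho>)"
  proof -
    have "c * \<tau> \<le> c * (real d * (1 + \<rho>) * \<alpha> / \<rho>)" using tau c by (intro mult_left_mono) auto
    then show ?thesis by simp
  qed
  moreover have "c * (real d * (1 + \<rho>) * \<alpha> / \<rho>) = k * \<beta>" by (simp add: k_def \<beta>_def mult_ac)
  ultimately have "exp (- k * \<beta>) \<le> exp (- c * \<tau>)" by simp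
  then have "\<rho> * exp (- k * \<beta>) \<le> \<rho> * exp (- c * \<tau>)" using rho by (intro mult_left_mono) auto
  then have h1: "\<rho> * exp (- k * \<beta>) \<le> \<alpha>" using alpha1 by linarith
  have "real d * (\<rho> * exp (- k * \<beta>)) \<le> real d * \<alpha>" using h1 by (intro mult_left_mono) auto
  then have h2: "\<rho> * real d * exp (- k * \<beta>) \<le> \<beta>" by (simp add: \<beta>_def mult_ac)
  have "\<rho> * real d * exp (- k * \<beta>) * exp (k * \<beta>) \<le> \<beta> * exp (k * \<beta>)"
    using h2 by (intro mult_right_mono) auto
  then have h3: "\<rho> * real d \<le> \<beta> * exp (k * \<beta>)"
    by (simp add: mult.assoc exp_add[symmetric])
  have k1: "1 \<le> k"
  proof -
    have "1 \<le> c / \<rho>" using c rho by simp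
    moreover have "1 \<le> 1 + \<rho>" using rho by simp
    ultimately have "1 * 1 \<le> c / \<rho> * (1 + \<rho>)" by (intro mult_mono) auto
    then show ?thesis by (simp add: k_def)
  qed
  have "k * (\<rho> * real d) \<le> k * (\<beta> * exp (k * \<beta>))" using h3 k1 by (intro mult_left_mono) auto
  then have "k * (\<rho> * real d) \<le> (k * \<beta>) * exp (k * \<beta>)" by (simp add: mult.assoc)
  moreover have "\<rho> * real d \<le> k * (\<rho> * real d)"
  proof -
    have "0 \<le> \<rho> * real d" using rho by simp
    then have "1 * (\<rho> * real d) \<le> k * (\<rho> * real d)" using k1 by (intro mult_right_mono)
    then show ?thesis by simp
  qed
  moreover have "k * \<beta> \<le> (1+x)^2 * real d * \<alpha>"
  proof -
    have "k \<le> (1+x)^2"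
    proof -
      have cx: "c * (1+x) \<le> (1+x) * x" using c x by (simp add: mult_right_mono mult.commute)
      have "c / \<rho> = c * (1+x) / x" by (simp add: \<rho>_def)
      also have "\<dots> \<le> 1 + x" using cx x by (simp add: pos_divide_le_eq)
      finally have "c / \<rho> \<le> 1 + x" .
      moreover have "1 + \<rho> \<le> 1 + x" using rho x by (simp add: \<rho>_def divide_le_eq)
      ultimately have "c / \<rho> * (1 + \<rho>) \<le> (1+x) * (1+x)"
        using c rho by (intro mult_mono) auto
      then show ?thesis by (simp add: k_def power2_eq_square)
    qed
    then show ?thesis using alpha_nn by (simp add: \<beta>_def mult_right_mono mult.assoc)
  qed
  moreover have "0 \<le> k * \<beta>" using c rho alpha_nn by (simp add: k_def \<beta>_def)
  ultimately have "\<rho> * real d \<le> ((1+x)^2 * real d * \<alpha>) * exp ((1+x)^2 * real d * \<alpha>)"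
    using xexp_mono by (meson order.trans)
  moreover have eq1: "(1+x)^2 * real d * \<alpha> = (1+x)^2 * real d * S / W" by (simp add: \<alpha>_def)
  moreover have eq2: "\<rho> * real d = real d * x / (1 + x)" by (simp add: \<rho>_def)
  ultimately show ?thesis unfolding S_def W_def by simp
qed


lemma sigma_sum:
  fixes h :: "nat \<Rightarrow> nat set \<Rightarrow> real"
  assumes fV: "finite V"
  shows "(\<Sum>p\<in>Sigma V (Iv V E). h (fst p) (snd p)) = (\<Sum>v\<in>V. \<Sum>K\<in>Iv V E v. h v K)"
  using sum.Sigma[OF fV, of "Iv V E" h] finite_Iv[OF fV] by (simp add: split_beta)

lemma Zpos:
  fixes x :: real
  assumes G: "simple_graph V E" and x: "0 \<le> x"
  shows "1 \<le> indep_poly V E x"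
proof -
  have fV: "finite V" using G by (simp add: simple_graph_def)
  have e: "{} \<in> {J. independent_set V E J}" by (simp add: independent_set_def)
  have "(1::real) = (\<Sum>J\<in>{{}::nat set}. x ^ card J)" by simp
  also have "\<dots> \<le> (\<Sum>J\<in>{J. independent_set V E J}. x ^ card J)"
    using e x by (intro sum_mono2 finite_I[OF fV]) auto
  finally show ?thesis by (simp add: indep_poly_def)
qed

lemma graph_bound:
  fixes x :: real
  assumes G: "simple_graph V E" and T: "triangle_free V E" and deg: "\<forall>u\<in>V. vdegree V E u \<le> d"
    and Vne: "V \<noteq> {}" and x: "0 < x"
  defines "S \<equiv> (\<Sum>J\<in>{J. independent_set V E J}. real (card J) * x ^ card J)"
  defines "Z \<equiv> indep_poly V E x"
  shows "real d * x / (1 + x) \<le> ((1+x)^2 * real d * (S / (real (card V) * Z))) * exp ((1+x)^2 * real d * (S / (real (card V) * Z)))"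
proof -
  have fV: "finite V" using G by (simp add: simple_graph_def)
  define a where "a = (\<lambda>p::nat \<times> nat set. x ^ card (snd p))"
  define Y where "Y = (\<lambda>p::nat \<times> nat set. card (Unc V E (fst p) (snd p)))"
  define P where "P = Sigma V (Iv V E)"
  have fP: "finite P" unfolding P_def using fV finite_Iv[OF fV] by auto
  have eS: "(\<Sum>p\<in>P. a p * x) = S"
  proof -
    have "(\<Sum>p\<in>P. a p * x) = (\<Sum>v\<in>V. \<Sum>K\<in>Iv V E v. x ^ card K * x)"
      unfolding P_def a_def using sigma_sum[OF fV, of "\<lambda>v K. x ^ card K * x"] by simp
    also have "\<dots> = (\<Sum>v\<in>V. \<Sum>J\<in>{J. independent_set V E J}. if v \<in> J then x ^ card J else 0)"
      by (rule sum.cong[OF refl], rule Pdec[OF G T, symmetric])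
    also have "\<dots> = S" unfolding S_def by (rule Ssum[OF G])
    finally show ?thesis .
  qed
  have eW: "(\<Sum>p\<in>P. a p * (x + (1+x) ^ Y p)) = real (card V) * Z"
  proof -
    have "(\<Sum>p\<in>P. a p * (x + (1+x) ^ Y p)) = (\<Sum>v\<in>V. \<Sum>K\<in>Iv V E v. x ^ card K * (x + (1+x) ^ card (Unc V E v K)))"
      unfolding P_def a_def Y_def using sigma_sum[OF fV, of "\<lambda>v K. x ^ card K * (x + (1+x) ^ card (Unc V E v K))"] by simp
    also have "\<dots> = (\<Sum>v\<in>V. Z)"
      unfolding Z_def by (rule sum.cong[OF refl], rule Zdec[OF G T, symmetric])
    finally show ?thesis by simp
  qed
  have eQ: "(\<Sum>p\<in>P. a p * (real (Y p) * x * (1+x) ^ Y p)) \<le> (1+x) * real d * (\<Sum>p\<in>P. a p * x)"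
  proof -
    have "(\<Sum>p\<in>P. a p * (real (Y p) * x * (1+x) ^ Y p)) = (\<Sum>v\<in>V. \<Sum>K\<in>Iv V E v. x ^ card K * (real (card (Unc V E v K)) * x * (1+x) ^ card (Unc V E v K)))"
      unfolding P_def a_def Y_def using sigma_sum[OF fV, of "\<lambda>v K. x ^ card K * (real (card (Unc V E v K)) * x * (1+x) ^ card (Unc V E v K))"] by simp
    also have "\<dots> = (\<Sum>v\<in>V. (1 + x) * (\<Sum>J\<in>{J. independent_set V E J}. real (card (J \<inter> Nb V E v)) * x ^ card J))"
      by (rule sum.cong[OF refl], rule Qdec[OF G T, symmetric])
    also have "\<dots> = (1 + x) * (\<Sum>v\<in>V. \<Sum>J\<in>{J. independent_set V E J}. real (card (J \<inter> Nb V E v)) * x ^ card J)"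
      by (simp add: sum_distrib_left)
    also have "\<dots> \<le> (1 + x) * (real d * S)"
      unfolding S_def using Qsum[OF G deg] x by (intro mult_left_mono) auto
    finally show ?thesis using eS by (simp add: mult.assoc)
  qed
  have Zp: "1 \<le> Z" unfolding Z_def using Zpos[OF G] x by simp
  have Wpos: "0 < (\<Sum>p\<in>P. a p * (x + (1+x) ^ Y p))" unfolding eW using Zp Vne fV by (simp add: card_gt_0_iff)
  have Yd: "\<And>p. p \<in> P \<Longrightarrow> Y p \<le> d"
  proof -
    fix p assume "p \<in> P"
    then have v: "fst p \<in> V" and K: "snd p \<in> Iv V E (fst p)" by (auto simp: P_def)
    show "Y p \<le> d" unfolding Y_def using Kfacts(6)[OF G v K empty_subsetI] deg v by (meson order_trans)
  qed
  have an: "\<And>p. p \<in> P \<Longrightarrow> 0 \<le> a p" using x by (simp add: a_def)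
  show ?thesis using abstract_bound[OF fP x an Yd Wpos eQ] unfolding eS eW by (simp add: mult.assoc)
qed


lemma alpha_bar_eq:
  assumes fV: "finite V"
  shows "alpha_bar V E x = (\<Sum>J\<in>{J. independent_set V E J}. real (card J) * x ^ card J) / indep_poly V E x"
proof -
  have fI: "finite {J. independent_set V E J}"
    by (rule finite_subset[of _ "Pow V"]) (auto simp: independent_set_def fV)
  have P: "indep_poly V E = (\<lambda>y. \<Sum>J\<in>{J. independent_set V E J}. y ^ card J)"
    by (rule ext) (simp add: indep_poly_def)
  have D: "(indep_poly V E has_field_derivative (\<Sum>J\<in>{J. independent_set V E J}. real (card J) * x ^ (card J - 1))) (at x)"
    unfolding P by (rule DERIV_sum) (use DERIV_power[OF DERIV_ident] in simp)
  have "x * deriv (indep_poly V E) x = x * (\<Sum>J\<in>{J. independent_set V E J}. real (card J) * x ^ (card J - 1))"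
    using DERIV_imp_deriv[OF D] by simp
  also have "\<dots> = (\<Sum>J\<in>{J. independent_set V E J}. real (card J) * x ^ card J)"
    unfolding sum_distrib_left
  proof (rule sum.cong)
    fix J :: "nat set"
    show "x * (real (card J) * x ^ (card J - 1)) = real (card J) * x ^ card J"
      by (cases "card J") auto
  qed simp
  finally show ?thesis by (simp add: alpha_bar_def)
qed

lemma pair_ineq:
  fixes x y :: real
  assumes "0 < x" "x \<le> y"
  shows "(real a - real b) * (x ^ a * y ^ b - y ^ a * x ^ b) \<le> 0"
proof (cases "a \<le> b")
  case True
  then obtain k where k: "b = a + k" using le_Suc_ex by blast
  have "x ^ k \<le> y ^ k" using assms by (intro power_mono) auto
  then have "x ^ a * y ^ a * x ^ k \<le> x ^ a * y ^ a * y ^ k" using assms by (intro mult_left_mono) auto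
  then have "y ^ a * x ^ b \<le> x ^ a * y ^ b" by (simp add: k power_add mult_ac)
  moreover have "real a - real b \<le> 0" using True by simp
  ultimately show ?thesis by (simp add: mult_nonpos_nonneg)
next
  case False
  then obtain k where k: "a = b + k" using le_Suc_ex[of b a] by auto
  have "x ^ k \<le> y ^ k" using assms by (intro power_mono) auto
  then have "x ^ b * y ^ b * x ^ k \<le> x ^ b * y ^ b * y ^ k" using assms by (intro mult_left_mono) auto
  then have "x ^ a * y ^ b \<le> y ^ a * x ^ b" by (simp add: k power_add mult_ac)
  moreover have "0 \<le> real a - real b" using False by simp
  ultimately show ?thesis by (simp add: mult_nonneg_nonpos)
qed

lemma ratio_mono:
  fixes x y :: real and m :: "'a \<Rightarrow> nat"
  assumes fI: "finite I" and x: "0 < x" and xy: "x \<le> y"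
    and Zx: "0 < (\<Sum>J\<in>I. x ^ m J)" and Zy: "0 < (\<Sum>J\<in>I. y ^ m J)"
  shows "(\<Sum>J\<in>I. real (m J) * x ^ m J) / (\<Sum>J\<in>I. x ^ m J) \<le> (\<Sum>J\<in>I. real (m J) * y ^ m J) / (\<Sum>J\<in>I. y ^ m J)"
proof -
  define D where "D = (\<Sum>J\<in>I. \<Sum>K\<in>I. real (m J) * (x ^ m J * y ^ m K - y ^ m J * x ^ m K))"
  have D1: "D = (\<Sum>J\<in>I. real (m J) * x ^ m J) * (\<Sum>J\<in>I. y ^ m J) - (\<Sum>J\<in>I. real (m J) * y ^ m J) * (\<Sum>J\<in>I. x ^ m J)"
    by (simp add: D_def sum_subtractf sum_distrib_left sum_distrib_right right_diff_distrib mult_ac)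
  have swap: "D = (\<Sum>J\<in>I. \<Sum>K\<in>I. real (m K) * (x ^ m K * y ^ m J - y ^ m K * x ^ m J))"
    unfolding D_def by (rule sum.swap)
  have "D + D = (\<Sum>J\<in>I. \<Sum>K\<in>I. (real (m J) - real (m K)) * (x ^ m J * y ^ m K - y ^ m J * x ^ m K))"
    apply (subst (2) swap) unfolding D_def sum.distrib[symmetric]
    by (rule sum.cong[OF refl], rule sum.cong[OF refl]) (simp add: algebra_simps)
  also have "\<dots> \<le> 0"
    by (intro sum_nonpos pair_ineq x xy)
  finally have "D \<le> 0" by simp
  then have "(\<Sum>J\<in>I. real (m J) * x ^ m J) * (\<Sum>J\<in>I. y ^ m J) \<le> (\<Sum>J\<in>I. real (m J) * y ^ m J) * (\<Sum>J\<in>I. x ^ m J)"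
    using D1 by simp
  then show ?thesis using Zx Zy by (simp add: divide_le_eq_1 frac_le_eq field_simps)
qed


definition hT :: "nat \<Rightarrow> real \<Rightarrow> real" where
  "hT d a = a / (1 - a) * ((1 - a) / (1 - 2 * a)) ^ d"

lemma hT_strict:
  assumes "0 < a1" "a1 < a2" "a2 < 1/2"
  shows "hT d a1 < hT d a2"
proof -
  have pos: "0 < 1 - a1" "0 < 1 - a2" "0 < 1 - 2 * a1" "0 < 1 - 2 * a2" using assms by auto
  have "a1 * (1 - a2) < a2 * (1 - a1)" using assms by (simp add: algebra_simps)
  then have p: "a1 / (1 - a1) < a2 / (1 - a2)" using pos by (simp add: frac_less_eq divide_neg_pos)
  have "(1 - a1) * (1 - 2 * a2) \<le> (1 - a2) * (1 - 2 * a1)" using assms by (simp add: algebra_simps)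
  then have q: "(1 - a1) / (1 - 2 * a1) \<le> (1 - a2) / (1 - 2 * a2)" using pos by (simp add: frac_le_eq divide_nonpos_pos)
  have q0: "0 < (1 - a1) / (1 - 2 * a1)" using assms by simp
  have qd: "((1 - a1) / (1 - 2 * a1)) ^ d \<le> ((1 - a2) / (1 - 2 * a2)) ^ d"
    using q q0 by (intro power_mono) auto
  have qd0: "0 < ((1 - a1) / (1 - 2 * a1)) ^ d" using q0 by simp
  have "a1 / (1 - a1) * ((1 - a1) / (1 - 2 * a1)) ^ d < a2 / (1 - a2) * ((1 - a1) / (1 - 2 * a1)) ^ d"
    using p qd0 by (rule mult_strict_right_mono)
  also have "\<dots> \<le> a2 / (1 - a2) * ((1 - a2) / (1 - 2 * a2)) ^ d"
    using qd assms by (intro mult_left_mono) auto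
  finally show ?thesis by (simp add: hT_def)
qed

lemma hT_exists:
  assumes d: "1 \<le> d" and lam: "0 < lam"
  shows "\<exists>a. 0 < a \<and> a < 1/2 \<and> hT d a = lam"
proof -
  define a0 where "a0 = min (1/4) (lam / 2 ^ (d+1))"
  define e where "e = 1 / (2 + 2 * lam)"
  define a1 where "a1 = (1 - e) / 2"
  have a0: "0 < a0" "a0 \<le> 1/4" "a0 \<le> lam / 2 ^ (d+1)" using lam by (auto simp: a0_def)
  have e: "0 < e" "e \<le> 1/2" using lam by (auto simp: e_def field_simps)
  have a1: "1/4 \<le> a1" "a1 < 1/2" using e by (auto simp: a1_def)
  have h0: "hT d a0 \<le> lam"
  proof -
    have "a0 / (1 - a0) \<le> 2 * a0" using a0 by (simp add: field_simps)
    moreover have "(1 - a0) / (1 - 2 * a0) \<le> 2" using a0 by (simp add: field_simps)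
    moreover have "0 \<le> (1 - a0) / (1 - 2 * a0)" using a0 by simp
    ultimately have "hT d a0 \<le> 2 * a0 * 2 ^ d" unfolding hT_def using a0
      by (intro mult_mono power_mono) auto
    also have "\<dots> \<le> lam"
    proof -
      have "a0 * 2 ^ (d+1) \<le> lam" using a0(3) by (simp add: pos_le_divide_eq)
      then show ?thesis by (simp add: mult_ac)
    qed
    finally show ?thesis .
  qed
  have h1: "lam \<le> hT d a1"
  proof -
    have q1: "1 \<le> (1 - a1) / (1 - 2 * a1)" using a1 by (simp add: field_simps)
    have "(1 - a1) / (1 - 2 * a1) \<le> ((1 - a1) / (1 - 2 * a1)) ^ d"
      using q1 d by (metis power_one_right power_increasing)
    then have "a1 / (1 - a1) * ((1 - a1) / (1 - 2 * a1)) \<le> hT d a1"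
      unfolding hT_def using a1 by (intro mult_left_mono) auto
    moreover have "a1 / (1 - a1) * ((1 - a1) / (1 - 2 * a1)) = a1 / (1 - 2 * a1)" using a1 by simp
    moreover have "a1 / (1 - 2 * a1) = (1 - e) / (2 * e)"
    proof -
      have "1 - 2 * a1 = e" by (simp add: a1_def field_simps)
      then show ?thesis by (simp add: a1_def)
    qed
    moreover have "(1 - e) / (2 * e) = lam + 1/2" using lam by (simp add: e_def field_simps)
    ultimately show ?thesis by simp
  qed
  have cont: "continuous_on {a0..a1} (hT d)"
  proof -
    have "\<And>t. t \<in> {a0..a1} \<Longrightarrow> 1 - t \<noteq> 0 \<and> 1 - 2 * t \<noteq> 0" using a1 by auto
    then show ?thesis unfolding hT_def by (intro continuous_intros) auto
  qed
  obtain a where "a \<ge> a0" "a \<le> a1" "hT d a = lam"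
    using IVT'[of "hT d" a0 lam a1, OF h0 h1 _ cont] a0 a1 by auto
  then show ?thesis using a0 a1 by (intro exI[of _ a]) auto
qed

lemma alphaT_props:
  assumes d: "1 \<le> d" and lam: "0 < lam"
  shows "0 < alpha_T d lam \<and> alpha_T d lam < 1/2 \<and> hT d (alpha_T d lam) = lam"
proof -
  have ex1: "\<exists>!a. 0 < a \<and> a < 1/2 \<and> lam = a / (1 - a) * ((1 - a) / (1 - 2 * a)) ^ d"
  proof (rule ex_ex1I)
    show "\<exists>a. 0 < a \<and> a < 1/2 \<and> lam = a / (1 - a) * ((1 - a) / (1 - 2 * a)) ^ d"
      using hT_exists[OF d lam] by (auto simp: hT_def)
  next
    fix a b assume A: "0 < a \<and> a < 1/2 \<and> lam = a / (1 - a) * ((1 - a) / (1 - 2 * a)) ^ d"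
      and B: "0 < b \<and> b < 1/2 \<and> lam = b / (1 - b) * ((1 - b) / (1 - 2 * b)) ^ d"
    show "a = b"
    proof (rule ccontr)
      assume "a \<noteq> b"
      then have "a < b \<or> b < a" by auto
      moreover have "hT d a = lam" "hT d b = lam" using A B by (simp_all add: hT_def)
      ultimately show False
        using hT_strict[of a b d] hT_strict[of b a d] A B by auto
    qed
  qed
  have "0 < alpha_T d lam \<and> alpha_T d lam < 1/2 \<and> lam = alpha_T d lam / (1 - alpha_T d lam) * ((1 - alpha_T d lam) / (1 - 2 * alpha_T d lam)) ^ d"
    unfolding alpha_T_def by (rule theI'[OF ex1])
  then show ?thesis by (simp add: hT_def)
qed

lemma alphaT_bound:
  assumes d: "1 \<le> d" and lam: "0 < lam"
  shows "0 < real d * alpha_T d lam \<and> (real d * alpha_T d lam) * exp (real d * alpha_T d lam) \<le> lam * real d"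
proof -
  define a where "a = alpha_T d lam"
  have P: "0 < a" "a < 1/2" "hT d a = lam" using alphaT_props[OF d lam] by (auto simp: a_def)
  define u where "u = a / (1 - a)"
  have pos: "0 < 1 - a" "1 - a \<le> 1" "0 < 1 - 2 * a" using P by auto
  have u1: "a \<le> u" unfolding u_def using divide_left_mono[OF pos(2), of a] P pos by simp
  have u2: "u < 1" unfolding u_def using pos P by (simp add: divide_less_eq_1_pos)
  have u3: "0 < u" unfolding u_def using pos P by simp
  note u = u1 u2 u3
  have "1 - u \<le> exp (- u)" using exp_ge_add_one_self[of "-u"] by simp
  then have "exp u * (1 - u) \<le> exp u * exp (- u)" by (intro mult_left_mono) auto
  then have "exp u * (1 - u) \<le> 1" by (simp add: exp_minus)
  then have eu: "exp u \<le> 1 / (1 - u)" using u by (simp add: pos_le_divide_eq)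
  have "1 - u = (1 - 2 * a) / (1 - a)" proof -
    have ne: "1 - a \<noteq> 0" using pos by simp
    show ?thesis unfolding u_def using ne by (simp add: field_simps)
  qed
  then have "1 / (1 - u) = (1 - a) / (1 - 2 * a)" by simp
  moreover have "exp a \<le> exp u" using u(1) by simp
  ultimately have ea: "exp a \<le> (1 - a) / (1 - 2 * a)" using eu by linarith
  have "exp (real d * a) = exp a ^ d" by (simp add: exp_of_nat_mult)
  also have "\<dots> \<le> ((1 - a) / (1 - 2 * a)) ^ d" using ea by (intro power_mono) auto
  finally have e1: "exp (real d * a) \<le> ((1 - a) / (1 - 2 * a)) ^ d" .
  have "a * exp (real d * a) \<le> u * ((1 - a) / (1 - 2 * a)) ^ d"
    using e1 u P by (intro mult_mono) auto
  also have "\<dots> = lam" using P by (simp add: hT_def u_def)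
  finally have "a * exp (real d * a) \<le> lam" .
  then have "real d * (a * exp (real d * a)) \<le> real d * lam" by (intro mult_left_mono) auto
  moreover have "real d * a * exp (real d * a) = real d * (a * exp (real d * a))" by (rule mult.assoc)
  moreover have "real d * lam = lam * real d" by (rule mult.commute)
  ultimately have "real d * a * exp (real d * a) \<le> lam * real d" by linarith
  moreover have "0 < real d * a" using P d by simp
  ultimately show ?thesis unfolding a_def by simp
qed



lemma R_mono:
  assumes G: "simple_graph V E" and x: "0 < x" and xy: "x \<le> y"
  shows "alpha_bar V E x / real (card V) \<le> alpha_bar V E y / real (card V)"
proof -
  have fV: "finite V" using G by (simp add: simple_graph_def)
  have fI: "finite {J. independent_set V E J}" by (rule finite_I[OF fV])
  have Zx: "0 < (\<Sum>J\<in>{J. independent_set V E J}. x ^ card J)" using Zpos[OF G, of x] x by (simp add: indep_poly_def)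
  have Zy: "0 < (\<Sum>J\<in>{J. independent_set V E J}. y ^ card J)" using Zpos[OF G, of y] x xy by (simp add: indep_poly_def)
  have "alpha_bar V E x \<le> alpha_bar V E y"
    unfolding alpha_bar_eq[OF fV] indep_poly_def using ratio_mono[OF fI x xy Zx Zy] .
  then show ?thesis by (simp add: divide_right_mono)
qed

lemma R_nonneg:
  assumes G: "simple_graph V E" and x: "0 < x"
  shows "0 \<le> alpha_bar V E x / real (card V)"
proof -
  have fV: "finite V" using G by (simp add: simple_graph_def)
  have "0 \<le> indep_poly V E x" using Zpos[OF G, of x] x by simp
  then show ?thesis unfolding alpha_bar_eq[OF fV] using x by (intro divide_nonneg_nonneg sum_nonneg) auto
qed

lemma graph_bound2:
  assumes G: "simple_graph V E" and T: "triangle_free V E" and deg: "\<forall>u\<in>V. vdegree V E u \<le> d"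
    and Vne: "V \<noteq> {}" and x: "0 < x"
  shows "real d * x / (1 + x) \<le> ((1+x)^2 * real d * (alpha_bar V E x / real (card V))) * exp ((1+x)^2 * real d * (alpha_bar V E x / real (card V)))"
proof -
  have fV: "finite V" using G by (simp add: simple_graph_def)
  have e: "alpha_bar V E x / real (card V) = (\<Sum>J\<in>{J. independent_set V E J}. real (card J) * x ^ card J) / (real (card V) * indep_poly V E x)"
    unfolding alpha_bar_eq[OF fV] by (simp add: mult.commute)
  show ?thesis unfolding e using graph_bound[OF G T deg Vne x] .
qed

lemma core:
  fixes C lam :: real and d :: nat
  assumes G: "simple_graph V E" and T: "triangle_free V E" and md: "max_degree V E d"
    and d1: "1 \<le> d" and lam: "0 < lam" "lam \<le> C" and C1: "1 \<le> C"
    and L2C: "2 * C \<le> ln (C * real d)"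
  defines "L \<equiv> ln (C * real d)"
  defines "\<delta> \<equiv> 1 / L"
  defines "s \<equiv> 1 - 3 * ln L / L"
  shows "s / (1 + \<delta>) ^ 3 * alpha_T d lam \<le> alpha_bar V E lam / real (card V)"
proof -
  have deg: "\<forall>u\<in>V. vdegree V E u \<le> d" using md by (simp add: max_degree_def)
  have Vne: "V \<noteq> {}" using md by (auto simp: max_degree_def)
  define R where "R = (\<lambda>x. alpha_bar V E x / real (card V))"
  define A where "A = real d * alpha_T d lam"
  have AT: "0 < A" "A * exp A \<le> lam * real d" using alphaT_bound[OF d1 lam(1)] by (auto simp: A_def)
  have L: "2 * C \<le> L" "2 \<le> L" "0 < L" using L2C C1 by (auto simp: L_def)
  have dl: "0 < \<delta>" using L by (simp add: \<delta>_def)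
  have lnL: "0 \<le> ln L" using L by simp
  have s1: "s \<le> 1" using lnL L by (simp add: s_def)
  have Rn: "\<And>x. 0 < x \<Longrightarrow> 0 \<le> R x" unfolding R_def using R_nonneg[OF G] by blast
  have rd: "0 < real d" using d1 by simp
  have goal_equiv: "s * A / (1 + \<delta>) ^ 3 \<le> real d * R lam \<Longrightarrow> ?thesis"
  proof -
    assume h: "s * A / (1 + \<delta>) ^ 3 \<le> real d * R lam"
    have gen: "\<And>dd ss q aa :: real. dd * (ss / q * aa) = ss * (dd * aa) / q" by (simp add: mult_ac)
    have eq: "real d * (s / (1 + \<delta>) ^ 3 * alpha_T d lam) = s * A / (1 + \<delta>) ^ 3" unfolding A_def by (rule gen)
    have "real d * (s / (1 + \<delta>) ^ 3 * alpha_T d lam) \<le> real d * R lam" unfolding eq by (rule h)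
    then have "real d * (s / (1 + \<delta>) ^ 3 * alpha_T d lam) \<le> real d * (alpha_bar V E lam / real (card V))" by (simp only: R_def)
    then show ?thesis using rd by (rule mult_left_le_imp_le)
  qed
  show ?thesis
  proof (rule goal_equiv)
    show "s * A / (1 + \<delta>) ^ 3 \<le> real d * R lam"
    proof (cases "s \<le> 0")
      case True
      have "s * A / (1 + \<delta>) ^ 3 \<le> 0" using True AT dl by (simp add: divide_nonpos_pos mult_nonpos_nonneg)
      also have "0 \<le> real d * R lam" using Rn[OF lam(1)] by simp
      finally show ?thesis .
    next
      case False
      then have s0: "0 < s" by simp
      have d3: "1 \<le> (1 + \<delta>) ^ 3" using dl by simp
      have RL0: "0 \<le> real d * R lam" using Rn[OF lam(1)] by simp
      have main: "s * A \<le> (1 + \<delta>) ^ 3 * (real d * R lam)"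
      proof (cases "lam \<le> \<delta>")
        case True
        define x' where "x' = (1 + lam)^2 * real d * R lam"
        have gb: "real d * lam / (1 + lam) \<le> x' * exp x'"
          unfolding x'_def R_def using graph_bound2[OF G T deg Vne lam(1)] .
        have x'0: "0 \<le> x'" unfolding x'_def using Rn[OF lam(1)] by simp
        have "A / (1 + \<delta>) * exp (A / (1 + \<delta>)) \<le> A / (1 + \<delta>) * exp A"
          using AT dl by (intro mult_left_mono) (auto simp: divide_le_eq)
        also have "\<dots> \<le> lam * real d / (1 + \<delta>)" using AT dl by (simp add: divide_right_mono)
        also have "\<dots> \<le> real d * lam / (1 + lam)" using True lam dl
          by (simp add: frac_le mult.commute)
        also have "\<dots> \<le> x' * exp x'" by (rule gb)
        finally have "A / (1 + \<delta>) * exp (A / (1 + \<delta>)) \<le> x' * exp x'" .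
        then have "A / (1 + \<delta>) \<le> x'"
          using xexp_strict[OF x'0, of "A / (1 + \<delta>)"] by linarith
        then have "A \<le> (1 + \<delta>) * x'" using dl by (simp add: divide_le_eq mult.commute)
        also have "\<dots> \<le> (1 + \<delta>) * ((1 + \<delta>)^2 * (real d * R lam))"
        proof -
          have "(1 + lam)^2 \<le> (1 + \<delta>)^2" using True lam by (intro power_mono) auto
          then have "x' \<le> (1 + \<delta>)^2 * (real d * R lam)" unfolding x'_def
            using RL0 by (simp add: mult.assoc mult_right_mono)
          then show ?thesis using dl by (intro mult_left_mono) auto
        qed
        also have "\<dots> = (1 + \<delta>) ^ 3 * (real d * R lam)" by (simp add: power3_eq_cube power2_eq_square)
        finally have "A \<le> (1 + \<delta>) ^ 3 * (real d * R lam)" .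
        moreover have "s * A \<le> A" using s1 AT by (simp add: mult_le_cancel_right1)
        ultimately show ?thesis by linarith
      next
        case False
        then have dlam: "\<delta> \<le> lam" by simp
        define x' where "x' = (1 + \<delta>)^2 * real d * R \<delta>"
        have gb: "real d * \<delta> / (1 + \<delta>) \<le> x' * exp x'"
          unfolding x'_def R_def using graph_bound2[OF G T deg Vne dl] .
        have x'0: "0 \<le> x'" unfolding x'_def using Rn[OF dl] by simp
        have Cd: "exp L = C * real d" using C1 rd by (simp add: L_def)
        have AL: "A \<le> L"
        proof (rule ccontr)
          assume "\<not> A \<le> L"
          then have AL': "L < A" by simp
          then have "1 < A" using L by simp
          have "exp L < exp A" using AL' by simp
          then have "C * real d < exp A" unfolding Cd .
          also have "\<dots> < A * exp A" using \<open>1 < A\<close> by simp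
          also have "\<dots> \<le> lam * real d" by (rule AT(2))
          also have "\<dots> \<le> C * real d" using lam rd by (simp add: mult_right_mono)
          finally show False by simp
        qed
        have "s * A * exp (s * A) \<le> s * L * exp (s * L)"
          using s0 AT AL by (intro xexp_mono) auto
        also have "\<dots> \<le> L * exp (s * L)" using s1 L by (simp add: mult_le_cancel_right1)
        also have "exp (s * L) = C * real d / L ^ 3"
        proof -
          have "s * L = L - 3 * ln L" using L by (simp add: s_def algebra_simps)
          then have "exp (s * L) = exp L / exp (3 * ln L)" by (simp add: exp_diff)
          also have "exp (3 * ln L) = L ^ 3"
          proof -
            have "exp (3 * ln L) = exp (real 3 * ln L)" by simp
            also have "\<dots> = exp (ln L) ^ 3" by (rule exp_of_nat_mult)
            also have "\<dots> = L ^ 3" using L by simp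
            finally show ?thesis .
          qed
          finally show ?thesis using Cd by simp
        qed
        also have "L * (C * real d / L ^ 3) = C * real d / L ^ 2" using L by (simp add: power2_eq_square power3_eq_cube)
        also have "\<dots> < real d * \<delta> / (1 + \<delta>)"
        proof -
          have "real d * \<delta> / (1 + \<delta>) = real d / (L + 1)" using L by (simp add: \<delta>_def field_simps)
          moreover have "C * (L + 1) < L ^ 2"
          proof -
            have "C * (L + 1) < C * (2 * L)" using L C1 by simp
            also have "\<dots> = (2 * C) * L" by simp
            also have "\<dots> \<le> L * L" using L by (intro mult_right_mono) auto
            finally show ?thesis by (simp add: power2_eq_square)
          qed
          ultimately show ?thesis using L rd
            by (simp add: frac_less2 divide_less_eq less_divide_eq mult.commute mult.left_commute)
        qed
        also have "\<dots> \<le> x' * exp x'" by (rule gb)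
        finally have "s * A * exp (s * A) < x' * exp x'" .
        then have sx: "s * A \<le> x'"
          using xexp_mono[OF x'0, of "s * A"] by linarith
        have "R \<delta> \<le> R lam" unfolding R_def using R_mono[OF G dl dlam] .
        then have "x' \<le> (1 + \<delta>)^2 * (real d * R lam)" unfolding x'_def using rd
          by (simp add: mult.assoc mult_left_mono)
        also have "\<dots> \<le> (1 + \<delta>)^3 * (real d * R lam)"
          using RL0 dl by (intro mult_right_mono power_increasing) auto
        finally show ?thesis using sx by linarith
      qed
      then show ?thesis using dl by (simp add: divide_le_eq mult.commute)
    qed
  qed
qed


lemma phi_lim: "((\<lambda>L::real. 1 - (1 - 3 * ln L / L) / (1 + 1 / L) ^ 3) \<longlongrightarrow> 0) at_top"
proof -
  have a: "((\<lambda>L::real. ln L / L) \<longlongrightarrow> 0) at_top" by (rule ln_x_over_x_tendsto_0)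
  have b: "((\<lambda>L::real. 1 / L) \<longlongrightarrow> 0) at_top"
    using tendsto_inverse_0_at_top[OF filterlim_ident] by (simp add: inverse_eq_divide)
  have "((\<lambda>L::real. 1 - (1 - 3 * (ln L / L)) / (1 + 1 / L) ^ 3) \<longlongrightarrow> 1 - (1 - 3 * 0) / (1 + 0) ^ 3) at_top"
    by (intro tendsto_intros a b) simp
  then show ?thesis by simp
qed

lemma L_lim:
  fixes C :: real assumes "C > 0" shows "filterlim (\<lambda>d::nat. ln (C * real d)) at_top sequentially"
proof -
  have "filterlim (\<lambda>d::nat. ln C + ln (real d)) at_top sequentially"
    by (rule filterlim_tendsto_add_at_top[OF tendsto_const]) (rule filterlim_compose[OF ln_at_top filterlim_real_sequentially])
  then show ?thesis
    by (rule filterlim_cong[THEN iffD1, rotated 3]) (use assms in \<open>auto simp: ln_mult eventually_sequentially intro!: exI[of _ 1]\<close>)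
qed

theorem proposition4p1:
  fixes lam :: "nat \<Rightarrow> real"
  assumes pos: "\<forall>d\<ge>2. lam d > 0"
    and bdd: "\<exists>C. \<forall>d\<ge>2. lam d \<le> C"
  shows "\<exists>eps :: nat \<Rightarrow> real. eps \<longlonglongrightarrow> 0 \<and>
    (\<forall>d\<ge>2. \<forall>V E. simple_graph V E \<and> triangle_free V E \<and> max_degree V E d \<longrightarrow>
        alpha_bar V E (lam d) / real (card V) \<ge> (1 - eps d) * alpha_T d (lam d))"
proof -
  obtain C0 where C0: "\<forall>d\<ge>2. lam d \<le> C0" using bdd by blast
  define C where "C = max C0 1"
  have C1: "1 \<le> C" by (simp add: C_def)
  have lC: "\<And>d. 2 \<le> d \<Longrightarrow> lam d \<le> C" using C0 by (force simp: C_def)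
  define L where "L = (\<lambda>d::nat. ln (C * real d))"
  define phi where "phi = (\<lambda>L::real. 1 - (1 - 3 * ln L / L) / (1 + 1 / L) ^ 3)"
  define eps where "eps = (\<lambda>d. if 2 * C \<le> L d then phi (L d) else 1)"
  show ?thesis
  proof (intro exI[of _ eps] conjI allI impI)
    have Llim: "filterlim L at_top sequentially" unfolding L_def using L_lim C1 by simp
    have "((\<lambda>d. phi (L d)) \<longlongrightarrow> 0) sequentially"
      unfolding phi_def using filterlim_compose[OF phi_lim Llim] by simp
    moreover have "eventually (\<lambda>d. phi (L d) = eps d) sequentially"
    proof -
      have "eventually (\<lambda>d. 2 * C \<le> L d) sequentially" using Llim by (simp add: filterlim_at_top)
      then show ?thesis by eventually_elim (simp add: eps_def)
    qed
    ultimately show "eps \<longlonglongrightarrow> 0" by (rule Lim_transform_eventually)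
  next
    fix d :: nat and V E
    assume d2: "2 \<le> d" and H: "simple_graph V E \<and> triangle_free V E \<and> max_degree V E d"
    have G: "simple_graph V E" and T: "triangle_free V E" and md: "max_degree V E d" using H by auto
    have lam0: "0 < lam d" using pos d2 by simp
    show "(1 - eps d) * alpha_T d (lam d) \<le> alpha_bar V E (lam d) / real (card V)"
    proof (cases "2 * C \<le> L d")
      case True
      have "1 - eps d = (1 - 3 * ln (L d) / L d) / (1 + 1 / L d) ^ 3"
        using True by (simp add: eps_def phi_def)
      moreover have "(1 - 3 * ln (L d) / L d) / (1 + 1 / L d) ^ 3 * alpha_T d (lam d) \<le> alpha_bar V E (lam d) / real (card V)"
        using core[OF G T md _ lam0 lC[OF d2] C1] True d2 by (simp add: L_def)
      ultimately show ?thesis by simp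
    next
      case False
      then show ?thesis using R_nonneg[OF G lam0] by (simp add: eps_def)
    qed
  qed
qed

end
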